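(* If $A$ is any SIP subset of $\mathbb N$ (including $\mathbb N$ itself), then $A$ can be partitioned into two sets neither of which contains a translate of an SIP set. Consequently, the family of subsets of $\mathbb N$ that contain a translate of an SIP set is not a filterdual.
   Context: $\mathbb N=\{1,2,\dots\}$. For a finite $F\subset\mathbb Z$, $\sigma_F$ is the sum of its elements ($\sigma_\emptyset=0$); for $A\subset\mathbb Z$, $IP(A)=\{\sigma_F:F\subset A\text{ finite}\}$ and $SIP(A)=\{a-b:a,b\in IP(A)\}$. A set $B\subset\mathbb N$ is an SIP set if $SIP(L)\cap\mathbb N\subset B$ for some infinite $L\subset\mathbb N$. A set $B\subset\mathbb N$ contains a translate of an SIP set if there exist an infinite $L\subset\mathbb N$ and $u\in\mathbb Z$ with $(SIP(L)+u)\cap\mathbb N\subset B$. A family $\mathcal F$ of subsets of $\mathbb N$ (closed under supersets) is a filterdual if $A_1\cup A_2\in\mathcal F$ implies $A_1\in\mathcal F$ or $A_2\in\mathcal F$. *)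

theory Defs
  imports Main
begin

definition PosNat :: "int set" where
  "PosNat = {n. n \<ge> 1}"

definition IP :: "int set \<Rightarrow> int set" where
  "IP A = {\<Sum>F | F. F \<subseteq> A \<and> finite F}"

definition SIP :: "int set \<Rightarrow> int set" where
  "SIP A = {a - b | a b. a \<in> IP A \<and> b \<in> IP A}"

definition is_SIP_set :: "int set \<Rightarrow> bool" where
  "is_SIP_set B \<longleftrightarrow> B \<subseteq> PosNat \<and>
     (\<exists>L. L \<subseteq> PosNat \<and> infinite L \<and> SIP L \<inter> PosNat \<subseteq> B)"

definition contains_translate_SIP :: "int set \<Rightarrow> bool" where
  "contains_translate_SIP B \<longleftrightarrow>
     (\<exists>L u. L \<subseteq> PosNat \<and> infinite L \<and> ((\<lambda>x. x + u) ` SIP L) \<inter> PosNat \<subseteq> B)"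

definition filterdual :: "int set set \<Rightarrow> bool" where
  "filterdual \<F> \<longleftrightarrow> \<F> \<subseteq> Pow PosNat \<and>
     (\<forall>A B. A \<in> \<F> \<longrightarrow> A \<subseteq> B \<longrightarrow> B \<subseteq> PosNat \<longrightarrow> B \<in> \<F>) \<and>
     (\<forall>A1 A2. A1 \<union> A2 \<in> \<F> \<longrightarrow> A1 \<in> \<F> \<or> A2 \<in> \<F>)"

end

theory Submission
  imports Defs
begin


function runs :: "nat \<Rightarrow> nat" where
  "runs n = (if n = 0 then 0 else runs (n div 2) + (if odd n \<and> even (n div 2) then 1 else 0))"
  by auto
termination by (relation "measure id") auto

declare runs.simps[simp del]

lemma runs0[simp]: "runs 0 = 0" by (subst runs.simps) simp

lemma runs_rec: "runs n = runs (n div 2) + (if odd n \<and> even (n div 2) then 1 else 0)"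
  by (cases "n = 0") (simp, subst runs.simps, simp)

lemma runs_split:
  "lo < 2^A \<Longrightarrow> runs (hi*2^A + lo) + (if odd hi \<and> 2^A \<le> 2*lo then 1 else 0) = runs hi + runs lo"
proof (induction A arbitrary: lo)
  case 0
  then show ?case by simp
next
  case (Suc A)
  show ?case
  proof (cases "A = 0")
    case True
    with Suc.prems have "lo = 0 \<or> lo = 1" by auto
    then show ?thesis
    proof
      assume "lo = 0" thus ?thesis using True by (simp, subst runs_rec, simp)
    next
      assume l1: "lo = 1"
      have "runs (hi*2 + 1) = runs hi + (if even hi then 1 else 0)"
        by (subst runs_rec) simp
      moreover have "runs 1 = 1" by (subst runs_rec) simp
      ultimately show ?thesis using True l1 by auto
    qed
  next
    case False
    let ?n = "hi * 2 ^ Suc A + lo"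
    have d: "?n div 2 = hi*2^A + lo div 2" by simp
    have m: "odd ?n = odd lo" by simp
    have e: "even (hi*2^A + lo div 2) = even (lo div 2)" using False by simp
    have lt: "lo div 2 < 2^A" using Suc.prems by auto
    have IH: "runs (hi*2^A + lo div 2) + (if odd hi \<and> 2^A \<le> 2*(lo div 2) then 1 else 0) = runs hi + runs (lo div 2)"
      using Suc.IH[OF lt] .
    have c: "(2^A \<le> 2*(lo div 2)) = (2^Suc A \<le> 2*lo)"
    proof -
      have "even ((2::nat)^A)" using False by simp
      then obtain t where t: "(2::nat)^A = 2*t" by blast
      show ?thesis using t by auto
    qed
    have "runs ?n = runs (?n div 2) + (if odd ?n \<and> even (?n div 2) then 1 else 0)" by (rule runs_rec)
    moreover have "runs lo = runs (lo div 2) + (if odd lo \<and> even (lo div 2) then 1 else 0)" by (rule runs_rec)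
    ultimately show ?thesis using IH unfolding d m e c by (cases "odd lo \<and> even (lo div 2)"; cases "odd hi \<and> 2 ^ Suc A \<le> 2 * lo"; simp)
  qed
qed

lemma runs_pow_minus1: "s \<ge> 1 \<Longrightarrow> runs (2^s - 1) = 1"
proof (induction s rule: dec_induct)
  case base
  then show ?case by (subst runs_rec) simp
next
  case (step s)
  obtain k where k: "(2::nat)^s = Suc k" using not0_implies_Suc[of "(2::nat)^s"] by auto
  have "(2::nat)^Suc s - 1 = (2^s - 1)*2 + 1" unfolding power_Suc k by simp
  then have "runs (2^Suc s - 1) = runs (2^s - 1) + (if even (2^s - 1::nat) then 1 else 0)"
    by (subst runs_rec) simp
  moreover have "odd ((2::nat)^s - 1)" using step(1) by simp
  ultimately show ?case using step by simp
qed

lemma runs_comp: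
  "1 \<le> x \<Longrightarrow> 2*x \<le> 2^s \<Longrightarrow> runs (2^s - x) = runs (x - 1) + (if odd x then 1 else 0)"
proof (induction s arbitrary: x)
  case 0
  then show ?case by simp
next
  case (Suc s)
  show ?case
  proof (cases "s = 0")
    case True
    with Suc.prems have "x = 1" by auto
    then show ?thesis using True by (simp, subst runs_rec, simp)
  next
    case False
    define x' where "x' = (x+1) div 2"
    have x1: "1 \<le> x'" using Suc.prems unfolding x'_def by auto
    have "x \<le> 2^s" using Suc.prems by simp
    have "even ((2::nat)^s)" using False by simp
    then obtain t where t: "(2::nat)^s = 2*t" by blast
    have xt: "x \<le> 2*t" using Suc.prems t by simp
    have x2: "2*x' \<le> 2^s" using xt unfolding t x'_def by presburger
    have IH: "runs (2^s - x') = runs (x' - 1) + (if odd x' then 1 else 0)" using Suc.IH[OF x1 x2] .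
    have t2: "(2::nat)^Suc s = 4*t" using t by simp
    have d: "(2^Suc s - x) div 2 = 2^s - x'" using Suc.prems x2 unfolding t t2 x'_def by presburger
    have m: "odd (2^Suc s - x) = odd x" using Suc.prems unfolding t2 by presburger
    have e: "even (2^s - x') = even x'" using x2 unfolding t by presburger
    have d2: "(x - 1) div 2 = x' - 1" unfolding x'_def by auto
    have m2: "odd (x - 1) = even x" using Suc.prems by auto
    have e2: "even (x' - 1) = odd x'" using x1 by auto
    have r1: "runs (2^Suc s - x) = runs ((2^Suc s - x) div 2) + (if odd (2^Suc s - x) \<and> even ((2^Suc s - x) div 2) then 1 else 0)" by (rule runs_rec)
    have r2: "runs (x-1) = runs ((x-1) div 2) + (if odd (x-1) \<and> even ((x-1) div 2) then 1 else 0)" by (rule runs_rec)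
    show ?thesis unfolding r1 r2 d m e d2 m2 e2 IH by (cases "odd x"; cases "odd x'"; simp)
  qed
qed

definition pp :: "nat \<Rightarrow> bool" where "pp x = odd (runs x)"
definition qq :: "nat \<Rightarrow> bool" where "qq x = (odd (runs (x - 1)) \<noteq> even x)"

lemma pp_plus: "2*lo < 2^s \<Longrightarrow> pp (hi*2^s + lo) = (pp hi \<noteq> pp lo)"
proof -
  assume a: "2*lo < 2^s"
  hence "lo < 2^s" by simp
  from runs_split[OF this, of hi] a have "runs (hi*2^s + lo) = runs hi + runs lo" by simp
  then show ?thesis unfolding pp_def by simp
qed

lemma pp_scale: "pp (hi*2^s) = pp hi"
  using pp_plus[of 0 s hi] by (simp add: pp_def)

lemma qq_plus: "1 \<le> lo \<Longrightarrow> 2*lo < 2^s \<Longrightarrow> qq (hi*2^s + lo) = (pp hi \<noteq> qq lo)"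
proof -
  assume a: "1 \<le> lo" "2*lo < 2^s"
  hence l: "lo - 1 < 2^s" by simp
  have nc: "\<not> (2^s \<le> 2*(lo - 1))" using a by simp
  from runs_split[OF l, of hi] nc have r: "runs (hi*2^s + (lo - 1)) = runs hi + runs (lo - 1)" by simp
  have s1: "s \<ge> 1" using a by (cases s) auto
  have e: "even (hi*2^s + lo) = even lo" using s1 by (cases s) auto
  have "hi*2^s + lo - 1 = hi*2^s + (lo - 1)" using a by simp
  then show ?thesis unfolding qq_def pp_def using r e by (cases "even lo"; cases "even (runs hi)"; cases "even (runs (lo - 1))"; simp)
qed

lemma pp_minus: "1 \<le> hi \<Longrightarrow> 1 \<le> lo \<Longrightarrow> 2*(lo+1) \<le> 2^s \<Longrightarrow> pp (hi*2^s - lo) = (qq hi = qq lo)"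
proof -
  assume a: "1 \<le> hi" "1 \<le> lo" "2*(lo+1) \<le> 2^s"
  have eq: "hi*2^s - lo = (hi - 1)*2^s + (2^s - lo)"
  proof -
    obtain k where "hi = Suc k" using a by (cases hi) auto
    thus ?thesis using a by (simp add: algebra_simps)
  qed
  have l: "2^s - lo < (2::nat)^s" using a by simp
  have c: "(2::nat)^s \<le> 2*(2^s - lo)" using a by simp
  from runs_split[OF l, of "hi - 1"] c
  have r: "runs (hi*2^s - lo) + (if odd (hi - 1) then 1 else 0) = runs (hi - 1) + runs (2^s - lo)"
    unfolding eq by simp
  have cm: "runs (2^s - lo) = runs (lo - 1) + (if odd lo then 1 else 0)" using runs_comp[of lo s] a by simp
  have oh: "odd (hi - 1) = even hi" using a by auto
  have "odd (runs (hi*2^s - lo) + (if even hi then 1 else 0)) = odd (runs (hi - 1) + (runs (lo - 1) + (if odd lo then 1 else 0)))"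
    using r cm oh by simp
  then show ?thesis unfolding pp_def qq_def by (cases "even hi"; cases "even lo"; auto)
qed

lemma qq_minus: "1 \<le> hi \<Longrightarrow> 1 \<le> lo \<Longrightarrow> 2*(lo+2) \<le> 2^s \<Longrightarrow> qq (hi*2^s - lo) = (qq hi \<noteq> pp lo)"
proof -
  assume a: "1 \<le> hi" "1 \<le> lo" "2*(lo+2) \<le> 2^s"
  have m: "pp (hi*2^s - (lo+1)) = (qq hi = qq (lo+1))" using pp_minus[of hi "lo+1" s] a by simp
  have s1: "s \<ge> 1" using a by (cases s) auto
  have "(2::nat)^s \<le> hi*2^s" using a by simp
  moreover have "lo < 2^s" using a by simp
  ultimately have ge: "lo < hi*2^s" by linarith
  have e: "even (hi*2^s - lo) = even lo" using s1 ge by (cases s) auto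
  have "hi*2^s - lo - 1 = hi*2^s - (lo+1)" by simp
  then show ?thesis unfolding qq_def using m e unfolding pp_def qq_def
    by (cases "even lo"; simp)
qed

lemma qq_scale: "1 \<le> x \<Longrightarrow> qq (x*2^s) = qq x"
proof (cases "s = 0")
  case True then show ?thesis by simp
next
  case False
  assume a: "1 \<le> x"
  have eq: "x*2^s - 1 = (x - 1)*2^s + (2^s - 1)"
  proof -
    obtain k where "x = Suc k" using a by (cases x) auto
    thus ?thesis by (simp add: algebra_simps)
  qed
  have l: "2^s - 1 < (2::nat)^s" by simp
  have c: "(2::nat)^s \<le> 2*(2^s - 1)" using False by (cases s) auto
  have p1: "runs (2^s - 1) = 1" using runs_pow_minus1[of s] False by simp
  from runs_split[OF l, of "x - 1"] c p1
  have r: "runs (x*2^s - 1) + (if odd (x - 1) then 1 else 0) = runs (x - 1) + 1"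
    unfolding eq by simp
  have oh: "odd (x - 1) = even x" using a by auto
  have ev: "even (x*2^s)" using False by simp
  have "odd (runs (x*2^s - 1) + (if even x then 1 else 0)) = odd (runs (x - 1) + 1)"
    using r oh by simp
  then show ?thesis unfolding qq_def using ev by (cases "even x"; simp)
qed

lemma shift_plus: "2^s dvd (y::nat) \<Longrightarrow> 2*U < 2^s \<Longrightarrow> pp (y + U) = (pp y \<noteq> pp U)"
proof -
  assume "2^s dvd y" "2*U < 2^s"
  then obtain Y where "y = Y*2^s" by (auto elim!: dvdE simp: mult.commute)
  thus ?thesis using pp_plus[OF \<open>2*U < 2^s\<close>, of Y] pp_scale[of Y s] by simp
qed

lemma shift_minus: "2^s dvd (y::nat) \<Longrightarrow> 1 \<le> y \<Longrightarrow> 1 \<le> U \<Longrightarrow> 2*(U+1) \<le> 2^s \<Longrightarrow> pp (y - U) = (qq y = qq U)"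
proof -
  assume a: "2^s dvd y" "1 \<le> y" "1 \<le> U" "2*(U+1) \<le> 2^s"
  then obtain Y where y: "y = Y*2^s" by (auto elim!: dvdE simp: mult.commute)
  with a have "1 \<le> Y" by (cases Y) auto
  thus ?thesis using pp_minus[OF _ a(3) a(4), of Y] qq_scale[of Y s] y by simp
qed

lemma shift_minus2: "2^s dvd (y::nat) \<Longrightarrow> 1 \<le> y \<Longrightarrow> 1 \<le> U \<Longrightarrow> 2*(U+1) \<le> 2^s \<Longrightarrow> pp (y - U) = (qq y = qq U)"
  by (rule shift_minus)

lemma shift_qq_plus: "2^s dvd (y::nat) \<Longrightarrow> 1 \<le> U \<Longrightarrow> 2*U < 2^s \<Longrightarrow> qq (y + U) = (pp y \<noteq> qq U)"
proof -
  assume a: "2^s dvd y" "1 \<le> U" "2*U < 2^s"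
  then obtain Y where y: "y = Y*2^s" by (auto elim!: dvdE simp: mult.commute)
  thus ?thesis using qq_plus[OF a(2) a(3), of Y] pp_scale[of Y s] by simp
qed

lemma pow_dvd_mono: "(2::nat)^a \<le> d \<Longrightarrow> d < 2^b \<Longrightarrow> 2^b dvd (e::nat) \<Longrightarrow> 2^a dvd e"
proof -
  assume "(2::nat)^a \<le> d" "d < 2^b" "2^b dvd e"
  hence "(2::nat)^a < 2^b" by linarith
  hence "a < b" using power_less_imp_less_exp by force
  hence "(2::nat)^a dvd 2^b" by (simp add: le_imp_power_dvd)
  thus ?thesis using \<open>2^b dvd e\<close> by (rule dvd_trans)
qed

lemma key_nat:
  fixes U h1 h2 h3 s1 s2 s3 :: nat
  assumes h: "1 \<le> h1" "1 \<le> h2" "1 \<le> h3"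
    and d1: "d1 = h1*2^s1" and d2: "d2 = h2*2^s2" and d3: "d3 = h3*2^s3"
    and sU: "2*(U+2) \<le> 2^s1" and s12: "2*(d1+2) \<le> 2^s2" and s23: "2*(d2+2) \<le> 2^s3"
  shows "(pp (U + d1) = c \<and> pp (U + d2) = c \<and> pp (U + (d1 + d2)) = c \<and> pp (U + (d2 - d1)) = c
            \<and> pp (U + (d3 - d1)) = c \<and> pp (U + (d3 - d2)) = c) \<Longrightarrow> False"
    and "1 \<le> U \<Longrightarrow> (pp (d1 - U) = c \<and> pp (d2 - U) = c \<and> pp (d3 - U) = c \<and> pp (d3 - d2 + d1 - U) = c) \<Longrightarrow> False"
proof -
  have dv1: "2^s1 dvd d1" "2^s2 dvd d2" "2^s3 dvd d3" using d1 d2 d3 by auto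
  have g1: "2^s1 \<le> d1" "2^s2 \<le> d2" "2^s3 \<le> d3" using h d1 d2 d3 by auto
  have l1: "d1 < 2^s2" "d2 < 2^s3" using s12 s23 by auto
  have dv12: "2^s1 dvd d2" by (rule pow_dvd_mono[OF g1(1) l1(1) dv1(2)])
  have dv23: "2^s2 dvd d3" by (rule pow_dvd_mono[OF g1(2) l1(2) dv1(3)])
  have dv13: "2^s1 dvd d3" by (rule pow_dvd_mono[OF g1(1) l1(1) dv23])
  have lt12: "d1 < d2" "d2 < d3" using g1 l1 by linarith+
  have p1: "1 \<le> d1" using g1(1) by (meson le_trans one_le_numeral one_le_power)
  have p2: "1 \<le> d2" using p1 lt12 by linarith
  have qq2: "qq h2 = qq d2" "qq h3 = qq d3" unfolding d2 d3 using qq_scale h by metis+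
  have pp2: "pp h2 = pp d2" unfolding d2 using pp_scale by metis
  have s12': "2*d1 < 2^s2" "2*(d1+1) \<le> 2^s2" using s12 by simp_all
  have s23': "2*(d2+1) \<le> 2^s3" using s23 by simp
  have A: "pp (d1 + d2) = (pp d2 \<noteq> pp d1)"
    using pp_plus[OF s12'(1), of h2] unfolding d2[symmetric] pp2 by (simp add: add.commute)
  have B: "pp (d2 - d1) = (qq d2 = qq d1)"
    using pp_minus[OF h(2) p1 s12'(2)] unfolding d2[symmetric] qq2 .
  have s13: "2*(d1+1) \<le> 2^s3" using s23 lt12 by simp
  have C: "pp (d3 - d1) = (qq d3 = qq d1)"
    using pp_minus[OF h(3) p1 s13] unfolding d3[symmetric] qq2 .
  have D: "pp (d3 - d2) = (qq d3 = qq d2)"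
    using pp_minus[OF h(3) p2 s23'] unfolding d3[symmetric] qq2 .
  {
    assume all: "pp (U + d1) = c \<and> pp (U + d2) = c \<and> pp (U + (d1 + d2)) = c \<and> pp (U + (d2 - d1)) = c
            \<and> pp (U + (d3 - d1)) = c \<and> pp (U + (d3 - d2)) = c"
    have sU': "2*U < 2^s1" using sU by simp
    have E: "\<And>y. 2^s1 dvd y \<Longrightarrow> pp (U + y) = (pp y \<noteq> pp U)"
      using shift_plus[OF _ sU'] by (simp add: add.commute)
    have e1: "pp (U + d1) = (pp d1 \<noteq> pp U)" by (rule E[OF dv1(1)])
    have e2: "pp (U + d2) = (pp d2 \<noteq> pp U)" by (rule E[OF dv12])
    have e3: "pp (U + (d1 + d2)) = (pp (d1+d2) \<noteq> pp U)" by (rule E[OF dvd_add[OF dv1(1) dv12]])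
    have e4: "pp (U + (d2 - d1)) = (pp (d2 - d1) \<noteq> pp U)" by (rule E[OF dvd_diff_nat[OF dv12 dv1(1)]])
    have e5: "pp (U + (d3 - d1)) = (pp (d3 - d1) \<noteq> pp U)" by (rule E[OF dvd_diff_nat[OF dv13 dv1(1)]])
    have e6: "pp (U + (d3 - d2)) = (pp (d3 - d2) \<noteq> pp U)" by (rule E[OF dvd_diff_nat[OF dv13 dv12]])
    have k1: "(pp d1 \<noteq> pp U) = c" using all e1 by simp
    have k2: "(pp d2 \<noteq> pp U) = c" using all e2 by simp
    have k3: "(pp (d1+d2) \<noteq> pp U) = c" using all e3 by simp
    have k4: "(pp (d2 - d1) \<noteq> pp U) = c" using all e4 by simp
    have k5: "(pp (d3 - d1) \<noteq> pp U) = c" using all e5 by simp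
    have k6: "(pp (d3 - d2) \<noteq> pp U) = c" using all e6 by simp
    have x0: "\<not> pp d1" using k1 k2 k3 A by (cases "pp d1"; cases "pp d2"; cases "pp U"; cases c; simp_all)
    have x4: "\<not> pp (d2 - d1)" using k1 k4 x0 by (cases "pp (d2 - d1)"; cases "pp U"; cases c; simp_all)
    have x5: "\<not> pp (d3 - d1)" using k1 k5 x0 by (cases "pp (d3 - d1)"; cases "pp U"; cases c; simp_all)
    have x6: "\<not> pp (d3 - d2)" using k1 k6 x0 by (cases "pp (d3 - d2)"; cases "pp U"; cases c; simp_all)
    show False using x4 x5 x6 B C D by (cases "qq d1"; cases "qq d2"; cases "qq d3"; simp_all)
  }
  {
    assume U1: "1 \<le> U" and all: "pp (d1 - U) = c \<and> pp (d2 - U) = c \<and> pp (d3 - U) = c \<and> pp (d3 - d2 + d1 - U) = c"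
    have sU': "2*(U+1) \<le> 2^s1" using sU by simp
    have E: "\<And>y. 2^s1 dvd y \<Longrightarrow> 1 \<le> y \<Longrightarrow> pp (y - U) = (qq y = qq U)"
      using shift_minus[OF _ _ U1 sU'] by simp
    have dvx: "2^s1 dvd (d3 - d2 + d1)" by (rule dvd_add[OF dvd_diff_nat[OF dv13 dv12] dv1(1)])
    have F: "qq (d3 - d2 + d1) = (pp (d3 - d2) \<noteq> qq d1)"
    proof -
      have "2^s2 dvd (d3 - d2)" by (rule dvd_diff_nat[OF dv23 dv1(2)])
      moreover have "1 \<le> d1" using g1(1) by (meson le_trans one_le_numeral one_le_power)
      moreover have "2*d1 < 2^s2" using s12 by simp
      ultimately show ?thesis by (rule shift_qq_plus)
    qed
    have pos: "1 \<le> d1" "1 \<le> d2" "1 \<le> d3" "1 \<le> d3 - d2 + d1" using p1 lt12 by linarith+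
    have f1: "pp (d1 - U) = (qq d1 = qq U)" by (rule E[OF dv1(1) pos(1)])
    have f2: "pp (d2 - U) = (qq d2 = qq U)" by (rule E[OF dv12 pos(2)])
    have f3: "pp (d3 - U) = (qq d3 = qq U)" by (rule E[OF dv13 pos(3)])
    have f4: "pp (d3 - d2 + d1 - U) = (qq (d3 - d2 + d1) = qq U)" by (rule E[OF dvx pos(4)])
    have g1: "(qq d1 = qq U) = c" using all f1 by simp
    have g2: "(qq d2 = qq U) = c" using all f2 by simp
    have g3: "(qq d3 = qq U) = c" using all f3 by simp
    have g4: "(qq (d3 - d2 + d1) = qq U) = c" using all f4 by simp
    have h32: "qq d3 = qq d2" using g2 g3 by (cases "qq d2"; cases "qq d3"; cases "qq U"; cases c; simp_all)
    have h1: "qq (d3 - d2 + d1) = (\<not> qq d1)" using F D h32 by simp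
    show False using g1 g4 h1 by (cases "qq d1"; cases "qq (d3 - d2 + d1)"; cases "qq U"; cases c; simp_all)
  }
qed



lemma pick_pair:
  fixes L :: "int set"
  assumes "infinite L" "finite E"
  shows "\<exists>x z. x \<in> L \<and> z \<in> L \<and> x \<notin> E \<and> z \<notin> E \<and> z < x \<and> (2::int)^s dvd (x - z)"
proof -
  let ?L = "L - E"
  have inf: "infinite ?L" using assms by simp
  have fin: "finite ((\<lambda>n. n mod 2^s) ` ?L)"
  proof (rule finite_subset)
    show "(\<lambda>n. n mod 2^s) ` ?L \<subseteq> {0..<(2::int)^s}" by auto
  qed simp
  obtain a0 where a0: "a0 \<in> ?L" and inf2: "infinite {a \<in> ?L. a mod 2^s = a0 mod 2^s}"
    using pigeonhole_infinite[OF inf fin] by blast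
  have "infinite ({a \<in> ?L. a mod 2^s = a0 mod 2^s} - {a0})" using inf2 by simp
  then obtain b where "b \<in> {a \<in> ?L. a mod 2^s = a0 mod 2^s} - {a0}"
    using infinite_imp_nonempty[OF \<open>infinite ({a \<in> ?L. a mod 2^s = a0 mod 2^s} - {a0})\<close>] by blast
  hence b: "b \<in> ?L" "b mod 2^s = a0 mod 2^s" "b \<noteq> a0" by auto
  show ?thesis
  proof (cases "a0 < b")
    case True
    have "(2::int)^s dvd (b - a0)" using b(2) by (simp add: mod_eq_dvd_iff)
    then show ?thesis using True a0 b by blast
  next
    case False
    hence "b < a0" using b(3) by simp
    moreover have "(2::int)^s dvd (a0 - b)" using b(2) by (metis mod_eq_dvd_iff)
    ultimately show ?thesis using a0 b by blast
  qed
qed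

lemma SIP_mem:
  assumes "P \<subseteq> L" "N \<subseteq> L" "finite P" "finite N"
  shows "sum id P - sum id N \<in> SIP L"
  proof -
  have "sum id P \<in> IP L" unfolding IP_def using assms by (auto intro!: exI[of _ P])
  moreover have "sum id N \<in> IP L" unfolding IP_def using assms by (auto intro!: exI[of _ N])
  ultimately show ?thesis unfolding SIP_def by blast
qed

lemma exists_pow: "\<exists>s. (m::nat) \<le> 2^s"
  using less_exp[of m] by (intro exI[of _ m]) simp

lemma nat_pow_form:
  fixes x z :: int
  assumes "z < x" "(2::int)^s dvd (x - z)"
  shows "\<exists>h::nat. 1 \<le> h \<and> x - z = int (h * 2^s)"
proof -
  obtain k where k: "x - z = 2^s * k" using assms by (auto elim: dvdE)
  have "0 < 2^s * k" using k assms(1) by simp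
  hence "k > 0" by (simp add: zero_less_mult_iff)
  hence "int (nat k * 2^s) = k * 2^s" by simp
  hence "x - z = int (nat k * 2^s)" using k by (simp add: ac_simps)
  thus ?thesis using \<open>k > 0\<close> by (intro exI[of _ "nat k"]) auto
qed

lemma no_mono:
  assumes LP: "L \<subseteq> PosNat" and inf: "infinite L"
    and mono: "\<forall>n \<in> ((\<lambda>x. x + u) ` SIP L) \<inter> PosNat. pp (nat n) = c"
  shows False
proof -
  define U0 where "U0 = nat \<bar>u\<bar>"
  obtain s1 where s1: "2*(U0+2) \<le> 2^s1" using exists_pow by blast
  obtain x1 z1 where p1: "x1 \<in> L" "z1 \<in> L" "z1 < x1" "(2::int)^s1 dvd (x1 - z1)"
    using pick_pair[OF inf, of "{}" s1] by auto
  obtain h1 where h1: "1 \<le> h1" "x1 - z1 = int (h1 * 2^s1)" using nat_pow_form[OF p1(3,4)] by blast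
  define D1 where "D1 = h1 * 2^s1"
  obtain s2 where s2: "2*(D1+2) \<le> 2^s2" using exists_pow by blast
  obtain x2 z2 where p2: "x2 \<in> L" "z2 \<in> L" "x2 \<notin> {x1,z1}" "z2 \<notin> {x1,z1}" "z2 < x2" "(2::int)^s2 dvd (x2 - z2)"
    using pick_pair[OF inf, of "{x1,z1}" s2] by auto
  obtain h2 where h2: "1 \<le> h2" "x2 - z2 = int (h2 * 2^s2)" using nat_pow_form[OF p2(5,6)] by blast
  define D2 where "D2 = h2 * 2^s2"
  obtain s3 where s3: "2*(D2+2) \<le> 2^s3" using exists_pow by blast
  obtain x3 z3 where p3: "x3 \<in> L" "z3 \<in> L" "x3 \<notin> {x1,z1,x2,z2}" "z3 \<notin> {x1,z1,x2,z2}" "z3 < x3" "(2::int)^s3 dvd (x3 - z3)"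
    using pick_pair[OF inf, of "{x1,z1,x2,z2}" s3] by auto
  obtain h3 where h3: "1 \<le> h3" "x3 - z3 = int (h3 * 2^s3)" using nat_pow_form[OF p3(5,6)] by blast
  define D3 where "D3 = h3 * 2^s3"
  have i1: "int D1 = x1 - z1" "int D2 = x2 - z2" "int D3 = x3 - z3" using h1 h2 h3 D1_def D2_def D3_def by auto
  have g: "2^s1 \<le> D1" "2^s2 \<le> D2" "2^s3 \<le> D3" using h1 h2 h3 D1_def D2_def D3_def by auto
  have lt1: "D1 < D2"
  proof -
    have "D1 < 2*(D1+2)" by simp
    also have "\<dots> \<le> 2^s2" by (rule s2)
    also have "\<dots> \<le> D2" by (rule g(2))
    finally show ?thesis .
  qed
  have lt2: "D2 < D3"
  proof -
    have "D2 < 2*(D2+2)" by simp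
    also have "\<dots> \<le> 2^s3" by (rule s3)
    also have "\<dots> \<le> D3" by (rule g(3))
    finally show ?thesis .
  qed
  note lt = lt1 lt2
  have U0s: "U0 < D1"
  proof -
    have "U0 < 2*(U0+2)" by simp
    also have "\<dots> \<le> 2^s1" by (rule s1)
    also have "\<dots> \<le> D1" by (rule g(1))
    finally show ?thesis .
  qed
  have P: "\<And>Y::nat. int Y \<in> SIP L \<Longrightarrow> 0 < u + int Y \<Longrightarrow> pp (nat (u + int Y)) = c"
  proof -
    fix Y :: nat assume "int Y \<in> SIP L" "0 < u + int Y"
    hence "u + int Y \<in> ((\<lambda>x. x + u) ` SIP L) \<inter> PosNat" unfolding PosNat_def by (auto simp: add.commute)
    thus "pp (nat (u + int Y)) = c" using mono by blast
  qed
  have dist: "x1 \<noteq> z1" "x2 \<noteq> z2" "x3 \<noteq> z3" "x2 \<noteq> x1" "x2 \<noteq> z1" "z2 \<noteq> x1" "z2 \<noteq> z1"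
    "x3 \<noteq> x1" "x3 \<noteq> z1" "x3 \<noteq> x2" "x3 \<noteq> z2" "z3 \<noteq> x1" "z3 \<noteq> z1" "z3 \<noteq> x2" "z3 \<noteq> z2"
    using p1 p2 p3 by auto
  have fin: "\<And>A::int set. finite A \<Longrightarrow> A \<subseteq> L \<Longrightarrow> finite A" by simp
  have m1: "int (D1) \<in> SIP L"
  proof -
    have "sum id {x1} - sum id {z1} \<in> SIP L" by (rule SIP_mem) (use p1 p2 p3 in auto)
    moreover have "sum id {x1} - sum id {z1} = int (D1)" using i1 dist lt by (simp add: of_nat_diff less_imp_le; linarith)
    ultimately show ?thesis by simp
  qed
  have m2: "int (D2) \<in> SIP L"
  proof -
    have "sum id {x2} - sum id {z2} \<in> SIP L" by (rule SIP_mem) (use p1 p2 p3 in auto)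
    moreover have "sum id {x2} - sum id {z2} = int (D2)" using i1 dist lt by (simp add: of_nat_diff less_imp_le; linarith)
    ultimately show ?thesis by simp
  qed
  have m3: "int (D3) \<in> SIP L"
  proof -
    have "sum id {x3} - sum id {z3} \<in> SIP L" by (rule SIP_mem) (use p1 p2 p3 in auto)
    moreover have "sum id {x3} - sum id {z3} = int (D3)" using i1 dist lt by (simp add: of_nat_diff less_imp_le; linarith)
    ultimately show ?thesis by simp
  qed
  have m12: "int (D1 + D2) \<in> SIP L"
  proof -
    have "sum id {x1,x2} - sum id {z1,z2} \<in> SIP L" by (rule SIP_mem) (use p1 p2 p3 in auto)
    moreover have "sum id {x1,x2} - sum id {z1,z2} = int (D1 + D2)" using i1 dist lt by (simp add: of_nat_diff less_imp_le; linarith)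
    ultimately show ?thesis by simp
  qed
  have m21: "int (D2 - D1) \<in> SIP L"
  proof -
    have "sum id {x2,z1} - sum id {z2,x1} \<in> SIP L" by (rule SIP_mem) (use p1 p2 p3 in auto)
    moreover have "sum id {x2,z1} - sum id {z2,x1} = int (D2 - D1)" using i1 dist lt by (simp add: of_nat_diff less_imp_le; linarith)
    ultimately show ?thesis by simp
  qed
  have m31: "int (D3 - D1) \<in> SIP L"
  proof -
    have "sum id {x3,z1} - sum id {z3,x1} \<in> SIP L" by (rule SIP_mem) (use p1 p2 p3 in auto)
    moreover have "sum id {x3,z1} - sum id {z3,x1} = int (D3 - D1)" using i1 dist lt by (simp add: of_nat_diff less_imp_le; linarith)
    ultimately show ?thesis by simp
  qed
  have m32: "int (D3 - D2) \<in> SIP L"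
  proof -
    have "sum id {x3,z2} - sum id {z3,x2} \<in> SIP L" by (rule SIP_mem) (use p1 p2 p3 in auto)
    moreover have "sum id {x3,z2} - sum id {z3,x2} = int (D3 - D2)" using i1 dist lt by (simp add: of_nat_diff less_imp_le; linarith)
    ultimately show ?thesis by simp
  qed
  have m321: "int (D3 - D2 + D1) \<in> SIP L"
  proof -
    have "sum id {x3,z2,x1} - sum id {z3,x2,z1} \<in> SIP L" by (rule SIP_mem) (use p1 p2 p3 in auto)
    moreover have "sum id {x3,z2,x1} - sum id {z3,x2,z1} = int (D3 - D2 + D1)" using i1 dist lt by (simp add: of_nat_diff less_imp_le; linarith)
    ultimately show ?thesis by simp
  qed
  show False
  proof (cases "0 \<le> u")
    case True
    define U where "U = nat u"
    have uU: "u = int U" using True U_def by simp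
    have sU: "2*(U+2) \<le> 2^s1" using s1 U0_def U_def True by simp
    have Q: "\<And>Y. int Y \<in> SIP L \<Longrightarrow> 1 \<le> Y \<Longrightarrow> pp (U + Y) = c"
    proof -
      fix Y :: nat assume "int Y \<in> SIP L" "1 \<le> Y"
      moreover have "nat (u + int Y) = U + Y" using uU by simp
      ultimately show "pp (U + Y) = c" using P[of Y] uU by simp
    qed
    have "pp (U + D1) = c \<and> pp (U + D2) = c \<and> pp (U + (D1 + D2)) = c \<and> pp (U + (D2 - D1)) = c
            \<and> pp (U + (D3 - D1)) = c \<and> pp (U + (D3 - D2)) = c"
    proof -
      have "(1::nat) \<le> 2^s1" by simp
      hence pD1: "1 \<le> D1" using g(1) by linarith
      have pos: "1 \<le> D2" "1 \<le> D1 + D2" "1 \<le> D2 - D1" "1 \<le> D3 - D1" "1 \<le> D3 - D2"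
        using pD1 lt by simp_all
      have q: "pp (U + D1) = c" "pp (U + D2) = c" "pp (U + (D1 + D2)) = c" "pp (U + (D2 - D1)) = c"
          "pp (U + (D3 - D1)) = c" "pp (U + (D3 - D2)) = c"
        using Q[OF m1 pD1] Q[OF m2 pos(1)] Q[OF m12 pos(2)] Q[OF m21 pos(3)] Q[OF m31 pos(4)] Q[OF m32 pos(5)] .
      show ?thesis using q by simp
    qed
    then show False by (rule key_nat(1)[OF h1(1) h2(1) h3(1) D1_def D2_def D3_def sU s2 s3])
  next
    case False
    define U where "U = nat (-u)"
    have uU: "u = - int U" "1 \<le> U" using False U_def by auto
    have sU: "2*(U+2) \<le> 2^s1" using s1 U0_def U_def False by simp
    have Q: "\<And>Y. int Y \<in> SIP L \<Longrightarrow> U < Y \<Longrightarrow> pp (Y - U) = c"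
    proof -
      fix Y :: nat assume "int Y \<in> SIP L" "U < Y"
      moreover have "nat (u + int Y) = Y - U" using uU \<open>U < Y\<close> by simp
      ultimately show "pp (Y - U) = c" using P[of Y] uU by simp
    qed
    have U1: "U < D1" using U0s U0_def U_def False by simp
    have "pp (D1 - U) = c \<and> pp (D2 - U) = c \<and> pp (D3 - U) = c \<and> pp (D3 - D2 + D1 - U) = c"
    proof -
      have pos: "U < D2" "U < D3" "U < D3 - D2 + D1" using U1 lt by simp_all
      have q: "pp (D1 - U) = c" "pp (D2 - U) = c" "pp (D3 - U) = c" "pp (D3 - D2 + D1 - U) = c"
        using Q[OF m1 U1] Q[OF m2 pos(1)] Q[OF m3 pos(2)] Q[OF m321 pos(3)] .
      show ?thesis using q by simp
    qed
    then show False by (rule key_nat(2)[OF h1(1) h2(1) h3(1) D1_def D2_def D3_def sU s2 s3 uU(2)])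
  qed
qed


lemma PosNat_inf: "infinite PosNat"
proof -
  have "PosNat = {1::int..}" unfolding PosNat_def by auto
  thus ?thesis using infinite_Ici[of "1::int"] by simp
qed

lemma split_any:
  "\<exists>B C. B \<union> C = A \<and> B \<inter> C = {} \<and> \<not> contains_translate_SIP B \<and> \<not> contains_translate_SIP C"
proof -
  define X where "X = {n::int. n \<in> PosNat \<and> pp (nat n)}"
  have nB: "\<not> contains_translate_SIP (A \<inter> X)"
  proof
    assume "contains_translate_SIP (A \<inter> X)"
    then obtain L u where L: "L \<subseteq> PosNat" "infinite L" and sub: "((\<lambda>x. x + u) ` SIP L) \<inter> PosNat \<subseteq> A \<inter> X"
      unfolding contains_translate_SIP_def by blast
    have "\<forall>n \<in> ((\<lambda>x. x + u) ` SIP L) \<inter> PosNat. pp (nat n) = True" using sub unfolding X_def by blast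
    thus False using no_mono[OF L] by blast
  qed
  have nC: "\<not> contains_translate_SIP (A - X)"
  proof
    assume "contains_translate_SIP (A - X)"
    then obtain L u where L: "L \<subseteq> PosNat" "infinite L" and sub: "((\<lambda>x. x + u) ` SIP L) \<inter> PosNat \<subseteq> A - X"
      unfolding contains_translate_SIP_def by blast
    have "\<forall>n \<in> ((\<lambda>x. x + u) ` SIP L) \<inter> PosNat. pp (nat n) = False" using sub unfolding X_def by blast
    thus False using no_mono[OF L] by blast
  qed
  show ?thesis
    by (rule exI[of _ "A \<inter> X"], rule exI[of _ "A - X"]) (use nB nC in blast)
qed

theorem theorem4p7:
  shows "(\<forall>A. is_SIP_set A \<longrightarrow>
           (\<exists>B C. B \<union> C = A \<and> B \<inter> C = {} \<and>
                  \<not> contains_translate_SIP B \<and> \<not> contains_translate_SIP C))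
       \<and> \<not> filterdual {B. B \<subseteq> PosNat \<and> contains_translate_SIP B}"
proof
  show "\<forall>A. is_SIP_set A \<longrightarrow>
           (\<exists>B C. B \<union> C = A \<and> B \<inter> C = {} \<and>
                  \<not> contains_translate_SIP B \<and> \<not> contains_translate_SIP C)"
    using split_any by blast
  show "\<not> filterdual {B. B \<subseteq> PosNat \<and> contains_translate_SIP B}"
  proof
    assume fd: "filterdual {B. B \<subseteq> PosNat \<and> contains_translate_SIP B}"
    obtain B C where BC: "B \<union> C = PosNat" "\<not> contains_translate_SIP B" "\<not> contains_translate_SIP C"
      using split_any[of PosNat] by blast
    have "contains_translate_SIP PosNat"
      unfolding contains_translate_SIP_def using PosNat_inf by blast
    hence "B \<union> C \<in> {B. B \<subseteq> PosNat \<and> contains_translate_SIP B}" using BC by simp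
    hence "B \<in> {B. B \<subseteq> PosNat \<and> contains_translate_SIP B} \<or> C \<in> {B. B \<subseteq> PosNat \<and> contains_translate_SIP B}"
      using fd unfolding filterdual_def by blast
    thus False using BC by blast
  qed
qed

end
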